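(* Let $\kappa\in(0,1)$, $\Omega\neq0$ and $0<\delta<2$ be fixed. For $\tau>0$, let $2W=2W(\tau)>0$ be the interface width of the traveling wave with speed $\Omega$, i.e. the unique positive solution of $$\frac{2(1-\kappa)^2}{\tau|\Omega|\delta}+\frac{1-\kappa}{\tau|\Omega|}\,2W=\exp\Big(\frac{1-\kappa}{\kappa\tau|\Omega|}\,2W\Big)-1.$$ Then for all sufficiently small $\tau>0$ the traveling wave is unstable, i.e. the linearized eigenvalue problem $$\tau\lambda\,Z(P)=\tau\Omega\,Z'(P)-Z(P)+\kappa^{-1}\Psi(P)Z(P)-\kappa^{-1}\int_{-\infty}^{\infty}\Psi(Q)Z(Q)\,dQ,\qquad \Psi=\mathbf{1}_{(-W,W)},$$ has an eigenvalue $\lambda$ with $\operatorname{Re}\lambda>0$ (with a bounded eigenfunction).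
   Context: The traveling waves are those of the mean-field particle dynamics $\tau\partial_t x(t,p)=\sigma(t)+\delta(p-\tfrac12)-H'(x(t,p))$, where $H'(x)=x+1$ for $x\le-\kappa$, $H'(x)=-\frac{1-\kappa}{\kappa}x$ for $|x|\le\kappa$, and $H'(x)=x-1$ for $x\ge\kappa$. These waves have the form $x(t,p)=X(p-\Omega t)$ and have a spinodal stripe (values in $(-\kappa,\kappa)$) of width $2W$. An eigenvalue of the linearized problem means a $\lambda\in\mathbb{C}$ admitting a nontrivial continuous $Z:\mathbb{R}\to\mathbb{C}$ of at most linear growth that satisfies the equation away from $P=\pm W$. Instability refers to the existence of such an eigenvalue with positive real part. *)

theory Defs
  imports "HOL-Analysis.Analysis"
begin

definition width_eq :: "real \<Rightarrow> real \<Rightarrow> real \<Rightarrow> real \<Rightarrow> real \<Rightarrow> bool" where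
  "width_eq \<kappa> \<Omega> \<delta> \<tau> W \<longleftrightarrow>
     2 * (1 - \<kappa>)^2 / (\<tau> * \<bar>\<Omega>\<bar> * \<delta>) + (1 - \<kappa>) / (\<tau> * \<bar>\<Omega>\<bar>) * (2 * W)
       = exp ((1 - \<kappa>) / (\<kappa> * \<tau> * \<bar>\<Omega>\<bar>) * (2 * W)) - 1"

definition stripe :: "real \<Rightarrow> real \<Rightarrow> real" where
  "stripe W P = (if - W < P \<and> P < W then 1 else 0)"

definition tw_eigenvalue :: "real \<Rightarrow> real \<Rightarrow> real \<Rightarrow> real \<Rightarrow> complex \<Rightarrow> bool" where
  "tw_eigenvalue \<kappa> \<Omega> \<tau> W lam \<longleftrightarrow>
     (\<exists>Z :: real \<Rightarrow> complex.
        continuous_on UNIV Z \<and> bounded (range Z) \<and> (\<exists>P. Z P \<noteq> 0) \<and>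
        (\<forall>P. P \<noteq> W \<and> P \<noteq> - W \<longrightarrow>
           (\<exists>D. (Z has_vector_derivative D) (at P) \<and>
              complex_of_real \<tau> * lam * Z P
                = complex_of_real (\<tau> * \<Omega>) * D - Z P
                  + complex_of_real (stripe W P / \<kappa>) * Z P
                  - complex_of_real (1 / \<kappa>) * integral {- W..W} Z)))"

end

theory Submission
  imports Defs "HOL-Complex_Analysis.Weierstrass_Factorization"
begin


lemma fp:
  fixes r :: real and u0 :: complex and H :: "complex \<Rightarrow> complex" and d :: real
  assumes r: "0 < r" "r \<le> 1/2" and u0: "exp u0 * d = - 1"
    and Hc: "continuous_on (cball u0 r) H"
    and Hb: "\<forall>u\<in>cball u0 r. norm (H u + d) \<le> r/(2*exp(Re u0 + r))"
  shows "\<exists>u\<in>cball u0 r. exp (-u) = H u"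
proof -
  define T where "T u = u + 1 - exp u * H u" for u
  have cT: "continuous_on (cball u0 r) T" unfolding T_def
    by (intro continuous_intros Hc)
  have mapT: "T \<in> cball u0 r \<rightarrow> cball u0 r"
  proof
    fix u assume u: "u \<in> cball u0 r"
    define v where "v = u - u0"
    have nv: "norm v \<le> r" using u by (simp add: v_def dist_norm norm_minus_commute)
    have e1: "norm (exp v - 1 - v) \<le> r/2"
      using norm_exp_bounds_lemma[of v] nv r by auto
    have "Re u \<le> Re u0 + r" using nv abs_Re_le_cmod[of v] unfolding v_def by auto
    hence "norm (exp u) \<le> exp (Re u0 + r)" by (simp add: norm_exp_eq_Re)
    moreover have "norm (H u + d) \<le> r/(2*exp(Re u0 + r))" using Hb u by auto
    ultimately have "norm (exp u) * norm (H u + d) \<le> exp (Re u0 + r) * (r/(2*exp(Re u0 + r)))"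
      by (intro mult_mono) auto
    hence "norm (exp u * (H u + d)) \<le> exp (Re u0 + r) * (r/(2*exp(Re u0 + r)))"
      by (simp only: norm_mult)
    also have "\<dots> = r/2" by simp
    finally have e2: "norm (exp u * (H u + d)) \<le> r/2" .
    have ev: "exp u = exp u0 * exp v" unfolding v_def by (simp add: exp_diff)
    have "T u - u0 = - (exp v - 1 - v) - exp u * (H u + d)"
    proof -
      have "d * exp u = (exp u0 * d) * exp v" using ev by (simp add: algebra_simps)
      hence "d * exp u = - exp v" using u0 by simp
      thus ?thesis unfolding T_def v_def by (simp add: algebra_simps)
    qed
    hence "norm (T u - u0) \<le> norm (- (exp v - 1 - v)) + norm (exp u * (H u + d))"
      by (metis norm_triangle_ineq4)
    moreover have "norm (- (exp v - 1 - v)) = norm (exp v - 1 - v)" by (rule norm_minus_cancel)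
    ultimately have "norm (T u - u0) \<le> r/2 + r/2" using e1 e2 by linarith
    thus "T u \<in> cball u0 r" by (simp add: dist_norm norm_minus_commute)
  qed
  obtain u where u: "u \<in> cball u0 r" "T u = u"
    using brouwer[OF compact_cball convex_cball _ cT mapT] r by auto
  hence "exp u * H u = 1" unfolding T_def by (simp add: algebra_simps)
  hence "exp (-u) = H u" by (simp add: exp_minus field_simps)
  thus ?thesis using u by auto
qed



lemma eig_pos:
  fixes \<kappa> \<Omega> \<tau> W :: real and \<Lambda> :: complex
  assumes k: "0 < \<kappa>" "\<kappa> < 1" and Om: "0 < \<Omega>" and tau: "0 < \<tau>" and W: "0 < W"
    and ReL: "Re \<Lambda> > 0"
    and nu: "1 + \<Lambda> - 1/\<kappa> \<noteq> 0"
    and I: "- (2*W) / (1 + \<Lambda> - 1/\<kappa>) + (\<tau>*\<Omega>) / (\<kappa> * (1+\<Lambda>) * (1 + \<Lambda> - 1/\<kappa>)^2)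
              * (1 - exp (- (2*W) * (1 + \<Lambda> - 1/\<kappa>) / (\<tau>*\<Omega>))) = \<kappa>"
  shows "tw_eigenvalue \<kappa> \<Omega> \<tau> W (\<Lambda> / \<tau>)"
proof -
  define s :: complex where "s = of_real (\<tau>*\<Omega>)"
  define \<mu> where "\<mu> = 1 + \<Lambda>"
  define \<nu> where "\<nu> = 1 + \<Lambda> - 1/\<kappa>"
  define b where "b = \<nu> / s"
  define a where "a = \<mu> / s"
  define B where "B = 1/\<nu> - 1/\<mu>"
  define g where "g z = -1/\<nu> + B * exp (b * (z - of_real W))" for z
  define h where "h z = exp (a * (z + of_real W))" for z
  define A where "A = g (- of_real W) + 1/\<mu>"
  define cl where "cl P = max (-W) (min W P)" for P
  define Z where "Z P = g (of_real (cl P)) + A * (h (of_real (min P (-W))) - 1)" for P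
  have s0: "s \<noteq> 0" using Om tau by (simp add: s_def)
  have Rmu: "Re \<mu> > 1" using ReL by (simp add: \<mu>_def)
  have mu0: "\<mu> \<noteq> 0" using Rmu by auto
  have nu0: "\<nu> \<noteq> 0" using nu by (simp add: \<nu>_def)
  have b0: "b \<noteq> 0" using s0 nu0 by (simp add: b_def)
  have munu: "\<mu> - \<nu> = 1/\<kappa>" by (simp add: \<mu>_def \<nu>_def)
  have Bk: "B = 1/(\<kappa>*\<mu>*\<nu>)"
  proof -
    have "B = (\<mu> - \<nu>)/(\<mu>*\<nu>)" using mu0 nu0 by (simp add: B_def field_simps)
    thus ?thesis using munu by simp
  qed
  have gW: "g (of_real W) = -1/\<mu>" by (simp add: g_def B_def)
  have Rea: "Re a > 0" using Rmu Om tau by (simp add: a_def s_def)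
  have cZ: "continuous_on UNIV Z"
    unfolding Z_def g_def h_def cl_def by (intro continuous_intros)
  have "compact ((\<lambda>y. g (of_real y)) ` {-W..W})"
    unfolding g_def by (intro compact_continuous_image continuous_intros) auto
  then obtain M1 where M1: "\<And>y. y \<in> {-W..W} \<Longrightarrow> norm (g (of_real y)) \<le> M1"
  proof -
    assume r: "\<And>M1. (\<And>y. y \<in> {-W..W} \<Longrightarrow> norm (g (of_real y)) \<le> M1) \<Longrightarrow> thesis"
    have "bounded ((\<lambda>y. g (of_real y)) ` {-W..W})" using \<open>compact _\<close> by (rule compact_imp_bounded)
    then obtain M where "\<forall>x\<in>(\<lambda>y. g (of_real y)) ` {-W..W}. norm x \<le> M" unfolding bounded_iff by blast
    thus thesis using r by blast
  qed
  have bZ: "bounded (range Z)"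
  proof -
    have "norm (Z P) \<le> M1 + norm A * 2" for P
    proof -
      have "cl P \<in> {-W..W}" using W by (auto simp: cl_def)
      hence n1: "norm (g (of_real (cl P))) \<le> M1" by (rule M1)
      have "norm (h (of_real (min P (-W)))) = exp (Re a * (min P (-W) + W))"
        by (simp add: h_def norm_exp_eq_Re)
      also have "\<dots> \<le> 1" using Rea by (simp add: mult_nonneg_nonpos)
      finally have "norm (h (of_real (min P (-W))) - 1) \<le> 2"
        using norm_triangle_ineq4[of "h (of_real (min P (-W)))" 1] by simp
      hence "norm (A * (h (of_real (min P (-W))) - 1)) \<le> norm A * 2"
        by (simp add: norm_mult mult_left_mono)
      thus ?thesis using n1 norm_triangle_ineq[of "g (of_real (cl P))"] unfolding Z_def
        by (smt (verit))
    qed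
    thus ?thesis unfolding bounded_iff by auto
  qed
  have "Z (W+1) = -1/\<mu>" using W by (simp add: Z_def cl_def gW h_def)
  hence nz: "\<exists>P. Z P \<noteq> 0" using mu0 by (intro exI[of _ "W+1"]) simp
  have Zin: "Z y = g (of_real y)" if "y \<in> {-W..W}" for y
    using that by (simp add: Z_def cl_def h_def)
  define G where "G z = - z/\<nu> + (B/b) * exp (b * (z - of_real W))" for z
  have dG: "(G has_field_derivative g z) (at z)" for z
    unfolding G_def g_def using b0 nu0
    by (auto intro!: derivative_eq_intros simp: field_simps)
  have "((\<lambda>y. g (of_real y)) has_integral (G (of_real W) - G (of_real (-W)))) {-W..W}"
  proof -
    have cG: "continuous_on {- W..W} (\<lambda>y. G (of_real y))"
      unfolding G_def using nu0 by (intro continuous_intros) auto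
    have dd: "((\<lambda>y. G (of_real y)) has_vector_derivative g (of_real x)) (at x)" for x
      by (rule has_vector_derivative_real_field[OF dG])
    show ?thesis
      using fundamental_theorem_of_calculus_interior_strong[of "{}" "-W" W "\<lambda>y. G (of_real y)" "\<lambda>y. g (of_real y)"]
        W cG dd by auto
  qed
  hence "(Z has_integral (G (of_real W) - G (of_real (-W)))) {-W..W}"
    by (rule has_integral_eq[rotated]) (simp add: Zin)
  hence intZ: "integral {-W..W} Z = G (of_real W) - G (of_real (-W))" by (rule integral_unique)
  have "G (of_real W) - G (of_real (-W)) = - (2*W) / \<nu> + s / (\<kappa> * \<mu> * \<nu>^2) * (1 - exp (- (2*W) * \<nu> / s))"
    unfolding G_def Bk b_def using s0 mu0 nu0 k
    by (simp add: field_simps power2_eq_square)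
  also have "\<dots> = \<kappa>" using I by (simp add: s_def \<mu>_def \<nu>_def)
  finally have intk: "integral {-W..W} Z = \<kappa>" using intZ by simp
  have eq: "\<exists>D. (Z has_vector_derivative D) (at P) \<and>
           complex_of_real \<tau> * (\<Lambda>/\<tau>) * Z P
                = complex_of_real (\<tau> * \<Omega>) * D - Z P
                  + complex_of_real (stripe W P / \<kappa>) * Z P
                  - complex_of_real (1 / \<kappa>) * integral {- W..W} Z"
    if P: "P \<noteq> W" "P \<noteq> -W" for P
  proof -
    have tl: "complex_of_real \<tau> * (\<Lambda>/\<tau>) = \<Lambda>" using tau by simp
    have ik: "complex_of_real (1 / \<kappa>) * integral {- W..W} Z = 1" using intk k by simp
    consider "P > W" | "-W < P \<and> P < W" | "P < -W" using P by linarith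
    thus ?thesis
    proof cases
      case 1
      have "Z y = -1/\<mu>" if "y \<in> {W<..}" for y
        using that W by (simp add: Z_def cl_def gW h_def)
      hence d: "(Z has_vector_derivative 0) (at P)"
        using has_vector_derivative_transform_within_open[of "\<lambda>_. -1/\<mu>" 0 P "{W<..}" Z] 1
        by auto
      have st: "stripe W P = 0" using 1 by (simp add: stripe_def)
      have "Z P = -1/\<mu>" using 1 W by (simp add: Z_def cl_def gW h_def)
      hence m1: "\<mu> * Z P = -1" using mu0 by simp
      have "\<Lambda> * Z P = \<mu> * Z P - Z P" by (simp add: \<mu>_def algebra_simps)
      hence "\<Lambda> * Z P = - Z P - 1" using m1 by simp
      thus ?thesis using d tl ik st by (intro exI[of _ 0]) simp
    next
      case 2
      have "Z y = g (of_real y)" if "y \<in> {-W<..<W}" for y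
        using that by (simp add: Zin)
      note zz = this
      have dg: "(g has_field_derivative (B * b * exp (b * (of_real P - of_real W)))) (at (of_real P))"
        unfolding g_def by (auto intro!: derivative_eq_intros)
      have "((\<lambda>y. g (of_real y)) has_vector_derivative (B * b * exp (b * (of_real P - of_real W)))) (at P)"
        by (rule has_vector_derivative_real_field[OF dg])
      hence d: "(Z has_vector_derivative (B * b * exp (b * (of_real P - of_real W)))) (at P)"
        by (rule has_vector_derivative_transform_within_open[where S="{-W<..<W}"]) (use 2 zz in auto)
      have st: "stripe W P = 1" using 2 by (simp add: stripe_def)
      have ZP: "Z P = g (of_real P)" using 2 by (simp add: Zin)
      define E where "E = exp (b * (of_real P - of_real W))"
      have sb: "s * (B * b * E) = \<nu> * B * E" using s0 by (simp add: b_def)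
      have ZE: "Z P = -1/\<nu> + B * E" unfolding ZP g_def E_def by simp
      have nZ: "\<nu> * Z P = -1 + \<nu> * B * E" unfolding ZE using nu0 by (simp add: algebra_simps)
      have nZ2: "\<nu> * Z P = Z P + \<Lambda> * Z P - (1/\<kappa>) * Z P" by (simp add: \<nu>_def algebra_simps)
      have "\<Lambda> * Z P = s * (B * b * exp (b * (of_real P - of_real W))) - Z P + (1/\<kappa>) * Z P - 1"
        unfolding E_def[symmetric] sb using nZ nZ2 by (simp add: algebra_simps)
      thus ?thesis using d tl ik st by (intro exI[of _ "B * b * exp (b * (of_real P - of_real W))"]) (simp add: s_def)
    next
      case 3
      have "Z y = g (- of_real W) + A * (h (of_real y) - 1)" if "y \<in> {..<-W}" for y
        using that W by (simp add: Z_def cl_def)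
      note zz = this
      have dg: "((\<lambda>z. g (- of_real W) + A * (h z - 1)) has_field_derivative (A * (a * exp (a * (of_real P + of_real W))))) (at (of_real P))"
        unfolding h_def by (auto intro!: derivative_eq_intros)
      have "((\<lambda>y. g (- of_real W) + A * (h (of_real y) - 1)) has_vector_derivative (A * (a * exp (a * (of_real P + of_real W))))) (at P)"
        by (rule has_vector_derivative_real_field[OF dg])
      hence d: "(Z has_vector_derivative (A * (a * exp (a * (of_real P + of_real W))))) (at P)"
        by (rule has_vector_derivative_transform_within_open[where S="{..<-W}"]) (use 3 zz in auto)
      have st: "stripe W P = 0" using 3 by (simp add: stripe_def)
      have ZP: "Z P = -1/\<mu> + A * h (of_real P)" using 3 W by (simp add: Z_def cl_def A_def algebra_simps)
      define E where "E = exp (a * (of_real P + of_real W))"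
      have sa: "s * (A * (a * E)) = \<mu> * A * E" using s0 by (simp add: a_def)
      have ZE: "Z P = -1/\<mu> + A * E" unfolding ZP h_def E_def by simp
      have nZ: "\<mu> * Z P = -1 + \<mu> * A * E" unfolding ZE using mu0 by (simp add: algebra_simps)
      have nZ2: "\<mu> * Z P = Z P + \<Lambda> * Z P" by (simp add: \<mu>_def algebra_simps)
      have "\<Lambda> * Z P = s * (A * (a * exp (a * (of_real P + of_real W)))) - Z P - 1"
        unfolding E_def[symmetric] sa using nZ nZ2 by (simp add: algebra_simps)
      thus ?thesis using d tl ik st by (intro exI[of _ "A * (a * exp (a * (of_real P + of_real W)))"]) (simp add: s_def)
    qed
  qed
  show ?thesis unfolding tw_eigenvalue_def
    using cZ bZ nz eq by blast
qed



lemma eig_reflect: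
  assumes "tw_eigenvalue \<kappa> (-\<Omega>) \<tau> W lam"
  shows "tw_eigenvalue \<kappa> \<Omega> \<tau> W lam"
proof -
  obtain Z where Zc: "continuous_on UNIV Z" and Zb: "bounded (range Z)" and Zn: "\<exists>P. Z P \<noteq> 0"
    and Ze: "\<And>P. P \<noteq> W \<Longrightarrow> P \<noteq> - W \<Longrightarrow>
           (\<exists>D. (Z has_vector_derivative D) (at P) \<and>
              complex_of_real \<tau> * lam * Z P
                = complex_of_real (\<tau> * (-\<Omega>)) * D - Z P
                  + complex_of_real (stripe W P / \<kappa>) * Z P
                  - complex_of_real (1 / \<kappa>) * integral {- W..W} Z)"
    using assms unfolding tw_eigenvalue_def by blast
  define Y where "Y P = Z (-P)" for P
  have Yc: "continuous_on UNIV Y" unfolding Y_def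
    by (intro continuous_on_compose2[OF Zc] continuous_intros) auto
  have "range Y \<subseteq> range Z" unfolding Y_def by auto
  hence Yb: "bounded (range Y)" using Zb bounded_subset by blast
  have Yn: "\<exists>P. Y P \<noteq> 0" using Zn unfolding Y_def by (metis minus_minus)
  have Yi: "integral {- W..W} Y = integral {- W..W} Z"
    unfolding Y_def using Henstock_Kurzweil_Integration.integral_reflect_real[of W "-W" Z] by simp
  have st: "stripe W (-P) = stripe W P" for P by (auto simp: stripe_def)
  have Ye: "\<exists>D. (Y has_vector_derivative D) (at P) \<and>
              complex_of_real \<tau> * lam * Y P
                = complex_of_real (\<tau> * \<Omega>) * D - Y P
                  + complex_of_real (stripe W P / \<kappa>) * Y P
                  - complex_of_real (1 / \<kappa>) * integral {- W..W} Y"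
    if P: "P \<noteq> W" "P \<noteq> -W" for P
  proof -
    obtain D where D: "(Z has_vector_derivative D) (at (-P))" and
      e: "complex_of_real \<tau> * lam * Z (-P)
                = complex_of_real (\<tau> * (-\<Omega>)) * D - Z (-P)
                  + complex_of_real (stripe W (-P) / \<kappa>) * Z (-P)
                  - complex_of_real (1 / \<kappa>) * integral {- W..W} Z"
      using Ze[of "-P"] P by auto
    have du: "(uminus has_vector_derivative (-1)) (at P)"
      by (auto intro!: derivative_eq_intros)
    have "((Z \<circ> uminus) has_vector_derivative ((-1) *\<^sub>R D)) (at P)"
      by (rule vector_diff_chain_at[OF du]) (use D in simp)
    moreover have Yeq: "Y = (\<lambda>x. Z (-x))" by (simp add: Y_def fun_eq_iff)
    ultimately have dY: "(Y has_vector_derivative (-D)) (at P)" by (simp add: o_def)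
    show ?thesis
      by (intro exI[of _ "-D"] conjI dY) (use e in \<open>simp add: Y_def Yi st\<close>)
  qed
  show ?thesis unfolding tw_eigenvalue_def using Yc Yb Yn Ye by blast
qed



lemma norm3: "norm (a - b - c) \<le> norm a + norm b + norm (c::'a::real_normed_vector)"
  using norm_triangle_ineq4[of "a-b" c] norm_triangle_ineq4[of a b] by linarith

lemma alg:
  fixes s n m k w :: complex
  assumes "s \<noteq> 0" "n \<noteq> 0" "m \<noteq> 0" "k \<noteq> 0"
  shows "- w / n + s / (k * m * n^2) * (1 - (s - w*k*m*n - k^2*m*n^2) / s) = k"
proof -
  have "1 - (s - w*k*m*n - k^2*m*n^2) / s = (w*k*m*n + k^2*m*n^2) / s"
    using assms by (simp add: field_simps)
  hence "s / (k * m * n^2) * (1 - (s - w*k*m*n - k^2*m*n^2) / s) = (w*k*m*n + k^2*m*n^2) / (k*m*n^2)"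
    using assms by simp
  also have "\<dots> = w / n + k" using assms by (simp add: field_simps power2_eq_square)
  finally show ?thesis by simp
qed

lemma main_pos:
  fixes \<kappa> \<Omega> \<delta> :: real
  assumes k0: "0 < \<kappa>" and k1: "\<kappa> < 1" and Om: "0 < \<Omega>" and d0: "0 < \<delta>" and d2: "\<delta> < 2"
  shows "\<exists>\<tau>0>0. \<forall>\<tau>. 0 < \<tau> \<and> \<tau> < \<tau>0 \<longrightarrow>
           (\<forall>W>0. width_eq \<kappa> \<Omega> \<delta> \<tau> W \<longrightarrow>
              (\<exists>lam. Re lam > 0 \<and> tw_eigenvalue \<kappa> \<Omega> \<tau> W lam))"
proof -
  define d where "d = \<delta>/2"
  have d: "0 < d" "d < 1" using d0 d2 by (auto simp: d_def)
  have lnd: "ln d < 0" using d by simp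
  define n0 where "n0 = (1-\<kappa>)/\<kappa>"
  have n0: "n0 > 0" using k0 k1 by (simp add: n0_def)
  have kn0: "\<kappa>^2 * n0^2 = (1-\<kappa>)^2" using k0 by (simp add: n0_def power_divide)
  define u0 where "u0 = Complex (-ln d) pi"
  have eu0: "exp u0 * d = -1"
  proof -
    have "exp u0 = of_real (exp (-ln d)) * Complex (cos pi) (sin pi)" by (simp only: u0_def exp_Complex)
    also have "\<dots> = - of_real (1/d)" using d by (simp add: exp_minus Complex_eq inverse_eq_divide)
    finally show ?thesis using d by simp
  qed
  define r where "r = min (1/2) (-ln d/2)"
  have r: "0 < r" "r \<le> 1/2" "r \<le> -ln d/2" using lnd by (auto simp: r_def)
  define \<eta> where "\<eta> = r/(2*exp(Re u0 + r))"
  have \<eta>: "\<eta> > 0" using r by (simp add: \<eta>_def)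
  define R where "R = cmod u0 + r"
  have R: "R > 0" using r by (simp add: R_def add_nonneg_pos)
  define \<theta> where "\<theta> = \<eta>*(1-\<kappa>)^2/(3*d)"
  have \<theta>: "\<theta> > 0" using \<eta> d k1 by (simp add: \<theta>_def)
  define C1 where "C1 = (n0+1)^2 + 2*n0 + 1"
  have C1: "C1 > 0" using n0 by (simp add: C1_def add_pos_pos)
  define \<epsilon>0 where "\<epsilon>0 = min 1 (min (\<theta>/(\<kappa>^2*C1)) (n0/2))"
  have \<epsilon>0: "\<epsilon>0 > 0" "\<epsilon>0 \<le> 1" "\<epsilon>0 \<le> \<theta>/(\<kappa>^2*C1)" "\<epsilon>0 \<le> n0/2"
  proof -
    show "\<epsilon>0 > 0" using \<theta> C1 k0 n0 by (simp add: \<epsilon>0_def)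
    show "\<epsilon>0 \<le> 1" unfolding \<epsilon>0_def by (rule min.cobounded1)
    show "\<epsilon>0 \<le> \<theta>/(\<kappa>^2*C1)" unfolding \<epsilon>0_def by (meson min.cobounded1 min.cobounded2 order_trans)
    show "\<epsilon>0 \<le> n0/2" unfolding \<epsilon>0_def by (meson min.cobounded1 min.cobounded2 order_trans)
  qed
  define p0 where "p0 = \<theta>/(d*\<kappa> + 2*\<kappa>^2*(n0+1)/(1-\<kappa>))"
  have pden: "d*\<kappa> + 2*\<kappa>^2*(n0+1)/(1-\<kappa>) > 0" using d k0 k1 n0 by (intro add_pos_pos) auto
  have p0: "p0 > 0" using \<theta> pden by (simp add: p0_def)
  define K where "K = 2 + 2*(1-\<kappa>)/d"
  have K: "K > 0" using d k1 by (simp add: K_def add_pos_pos)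
  define Y0 where "Y0 = R/\<epsilon>0*(1-\<kappa>)/\<kappa>"
  define sb where "sb = min (min 1 (\<theta>/(1+d))) (min (p0^2/K) ((1-\<kappa>)^2/(d*exp Y0)))"
  have sb: "sb > 0" using \<theta> d p0 K k1 by (simp add: sb_def)
  show ?thesis
  proof (intro exI[of _ "sb/\<Omega>"] conjI allI impI)
    show "sb/\<Omega> > 0" using sb Om by simp
    fix \<tau> W assume tau: "0 < \<tau> \<and> \<tau> < sb/\<Omega>" and W: "W > 0" and we: "width_eq \<kappa> \<Omega> \<delta> \<tau> W"
    define s where "s = \<tau>*\<Omega>"
    have s: "0 < s" "s < sb" using tau Om by (auto simp: s_def pos_less_divide_eq mult.commute)
    have s1: "s \<le> 1" "s \<le> \<theta>/(1+d)" "s \<le> p0^2/K" "s \<le> (1-\<kappa>)^2/(d*exp Y0)"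
      using s by (auto simp: sb_def)
    define Aa where "Aa = (1-\<kappa>)^2 / (d * s)"
    have Aa: "Aa > 0" using d s k1 by (simp add: Aa_def)
    define y where "y = (1-\<kappa>)/(\<kappa>* s)*(2*W)"
    have y0: "y > 0" using k0 k1 s W by (simp add: y_def)
    have ey: "exp y = 1 + Aa + \<kappa>*y"
    proof -
      have e1: "2 * (1 - \<kappa>)^2 / (\<tau> * \<bar>\<Omega>\<bar> * \<delta>) = Aa"
        using Om d0 tau by (simp add: Aa_def d_def s_def field_simps)
      have e2: "(1 - \<kappa>) / (\<tau> * \<bar>\<Omega>\<bar>) * (2 * W) = \<kappa>*y"
        using Om tau k0 by (simp add: y_def s_def field_simps)
      have e3: "(1 - \<kappa>) / (\<kappa> * \<tau> * \<bar>\<Omega>\<bar>) * (2 * W) = y"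
        using Om tau k0 by (simp add: y_def s_def field_simps)
      show ?thesis using we unfolding width_eq_def e1 e2 e3 by simp
    qed
    have eyup: "exp y - 1 \<le> Aa/(1-\<kappa>)"
    proof -
      have "y \<le> exp y - 1" using exp_ge_add_one_self[of y] by linarith
      hence "\<kappa>*y \<le> \<kappa>*(exp y - 1)" using k0 by (simp add: mult_left_mono)
      hence "(1-\<kappa>)*(exp y - 1) \<le> Aa" using ey by (simp add: algebra_simps)
      thus ?thesis using k1 by (simp add: field_simps mult.commute)
    qed
    have y2: "y^2/2 \<le> exp y" using exp_lower_Taylor_quadratic[of y] y0 by simp
    have ys: "y* s \<le> p0"
    proof -
      have "(y* s)^2 = y^2 * s^2" by (simp add: power_mult_distrib)
      also have "\<dots> \<le> 2*exp y * s^2" using y2 by (intro mult_right_mono) auto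
      also have "\<dots> \<le> 2*(1 + Aa/(1-\<kappa>)) * s^2" using eyup by (intro mult_right_mono) auto
      also have "\<dots> = 2* s^2 + 2*(1-\<kappa>)* s/d"
        using s d k1 by (simp add: Aa_def field_simps power2_eq_square)
      also have "\<dots> \<le> 2* s + 2*(1-\<kappa>)* s/d"
        using s s1 by (simp add: power2_eq_square mult_le_cancel_left1)
      also have "\<dots> = s*K" by (simp add: K_def field_simps)
      also have "\<dots> \<le> p0^2" using s1 K by (simp add: pos_le_divide_eq mult.commute)
      finally have "(y* s)^2 \<le> p0^2" .
      thus ?thesis using power2_le_imp_le[of "y * s" p0] p0 by linarith
    qed
    define L where "L = \<kappa>*y/(1-\<kappa>)"
    have L0: "L > 0" using k0 k1 y0 by (simp add: L_def)
    have LW: "2*W = L* s" using k0 k1 s by (simp add: L_def y_def field_simps)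
    have yY: "y > Y0"
    proof -
      have "d*exp Y0 * s \<le> (1-\<kappa>)^2" using s1(4) d by (simp add: pos_le_divide_eq mult.commute)
      hence "exp Y0 \<le> Aa" using d s by (simp add: Aa_def pos_le_divide_eq mult.commute mult.left_commute)
      hence "exp Y0 < exp y" using ey k0 y0 mult_pos_pos[of \<kappa> y] by linarith
      thus ?thesis by simp
    qed
    have RL: "R/L \<le> \<epsilon>0"
    proof -
      have "R/\<epsilon>0 \<le> L" using yY k0 k1 \<epsilon>0 by (simp add: Y0_def L_def field_simps)
      thus ?thesis using L0 \<epsilon>0 by (simp add: field_simps)
    qed
    define Q where "Q = s * exp y"
    have Q: "Q = s + (1-\<kappa>)^2/d + \<kappa>*y* s" using s d by (simp add: Q_def ey Aa_def field_simps)
    have kys: "\<kappa>*y* s > 0" using k0 y0 s by simp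
    have Qge: "Q \<ge> (1-\<kappa>)^2/d" using Q s kys by linarith
    have qq: "(1-\<kappa>)^2/d > 0" using k1 d by simp
    have Qpos: "Q > 0" using Qge qq by linarith
    define H :: "complex \<Rightarrow> complex" where "H u = (of_real s - of_real (2*W*\<kappa>)*(1+u/of_real L)*(-of_real n0+u/of_real L)
        - of_real (\<kappa>^2)*(1+u/of_real L)*(-of_real n0+u/of_real L)^2) / of_real Q" for u
    have Hc: "continuous_on (cball u0 r) H"
    proof -
      have "continuous_on (cball u0 r) (\<lambda>u::complex. (of_real s - of_real (2*W*\<kappa>)*(1+u * of_real (1/L))*(-of_real n0+u * of_real (1/L))
        - of_real (\<kappa>^2)*(1+u * of_real (1/L))*(-of_real n0+u * of_real (1/L))^2) * of_real (1/Q))"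
        by (intro continuous_intros)
      moreover have "H = (\<lambda>u::complex. (of_real s - of_real (2*W*\<kappa>)*(1+u * of_real (1/L))*(-of_real n0+u * of_real (1/L))
        - of_real (\<kappa>^2)*(1+u * of_real (1/L))*(-of_real n0+u * of_real (1/L))^2) * of_real (1/Q))"
        unfolding H_def by (simp add: fun_eq_iff divide_inverse)
      ultimately show ?thesis by simp
    qed
    have Hb: "\<forall>u\<in>cball u0 r. norm (H u + d) \<le> r/(2*exp(Re u0 + r))"
    proof
      fix u assume u: "u \<in> cball u0 r"
      have nu: "norm u \<le> R" using u norm_triangle_ineq2[of u u0]
        by (simp add: R_def dist_norm norm_minus_commute)
      define \<Lambda> where "\<Lambda> = u / of_real L"
      have nL: "norm \<Lambda> \<le> \<epsilon>0"
      proof -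
        have "norm \<Lambda> = norm u / L" using L0 by (simp add: \<Lambda>_def norm_divide)
        also have "\<dots> \<le> R/L" using nu L0 by (simp add: divide_right_mono)
        finally show ?thesis using RL by simp
      qed
      define \<mu> where "\<mu> = 1 + \<Lambda>"
      define \<nu> where "\<nu> = -of_real n0 + \<Lambda>"
      have nmu: "norm \<mu> \<le> 2" using nL \<epsilon>0 norm_triangle_ineq[of 1 \<Lambda>] by (simp add: \<mu>_def)
      have nnu: "norm \<nu> \<le> n0 + 1" using nL \<epsilon>0 norm_triangle_ineq[of "-of_real n0" \<Lambda>] n0
        by (simp add: \<nu>_def)
      define N where "N = of_real (s*(1+d) + d*\<kappa>*y* s) - of_real (2*W*\<kappa>)*\<mu>*\<nu>
          - of_real (\<kappa>^2)*(\<mu>*\<nu>^2 - of_real (n0^2))"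
      have HN: "H u + d = N / of_real Q"
      proof -
        have "H u + d = (of_real s - of_real (2*W*\<kappa>)*\<mu>*\<nu> - of_real (\<kappa>^2)*\<mu>*\<nu>^2 + of_real (d*Q)) / of_real Q"
          using Qpos by (simp add: H_def \<mu>_def \<nu>_def \<Lambda>_def field_simps)
        also have "of_real s - of_real (2*W*\<kappa>)*\<mu>*\<nu> - of_real (\<kappa>^2)*\<mu>*\<nu>^2 + of_real (d*Q) = N"
        proof -
          have "d*Q = d* s + \<kappa>^2*n0^2 + d*\<kappa>*y* s" using d kn0 by (simp add: Q field_simps)
          thus ?thesis by (simp add: N_def algebra_simps)
        qed
        finally show ?thesis .
      qed
      have b3: "norm (\<mu>*\<nu>^2 - of_real (n0^2)) \<le> \<epsilon>0 * C1"
      proof -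
        have eq: "\<mu>*\<nu>^2 - of_real (n0^2) = \<Lambda> * (\<nu>^2 + (-2* of_real n0 + \<Lambda>))"
          by (simp add: \<mu>_def \<nu>_def power2_eq_square algebra_simps)
        have "norm (\<nu>^2 + (-2* of_real n0 + \<Lambda>)) \<le> (n0+1)^2 + (2*n0 + 1)"
        proof -
          have "norm (\<nu>^2) \<le> (n0+1)^2" using nnu by (simp add: norm_power power_mono)
          moreover have "norm (-2* of_real n0 + \<Lambda>) \<le> 2*n0 + 1"
            using norm_triangle_ineq[of "-2* of_real n0" \<Lambda>] nL \<epsilon>0 n0 by (simp add: norm_mult)
          ultimately show ?thesis using norm_triangle_ineq[of "\<nu>^2" "-2* of_real n0 + \<Lambda>"] by linarith
        qed
        hence "norm \<Lambda> * norm (\<nu>^2 + (-2* of_real n0 + \<Lambda>)) \<le> \<epsilon>0 * ((n0+1)^2 + (2*n0 + 1))"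
          using nL \<epsilon>0 by (intro mult_mono) auto
        thus ?thesis unfolding eq by (simp add: norm_mult C1_def add.assoc)
      qed
      have t1: "s*(1+d) \<le> \<theta>" using s1(2) d by (simp add: pos_le_divide_eq)
      have t2: "d*\<kappa>*y* s + 2*W*\<kappa>*(2*(n0+1)) \<le> \<theta>"
      proof -
        have "d*\<kappa>*y* s + 2*W*\<kappa>*(2*(n0+1)) = (y* s)*(d*\<kappa> + 2*\<kappa>^2*(n0+1)/(1-\<kappa>))"
        proof -
          have W2: "2*W = \<kappa>*y* s/(1-\<kappa>)" using LW by (simp add: L_def)
          have "2*W*\<kappa>*(2*(n0+1)) = (2*W)*(\<kappa>*(2*(n0+1)))" by (simp only: mult.assoc)
          also have "\<dots> = (\<kappa>*y* s/(1-\<kappa>))*(\<kappa>*(2*(n0+1)))" using W2 by simp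
          finally have eqW: "2*W*\<kappa>*(2*(n0+1)) = (\<kappa>*y* s/(1-\<kappa>))*(\<kappa>*(2*(n0+1)))" .
          show ?thesis unfolding eqW using k1 by (simp add: field_simps power2_eq_square)
        qed
        also have "\<dots> \<le> p0 * (d*\<kappa> + 2*\<kappa>^2*(n0+1)/(1-\<kappa>))"
          using ys pden by (simp add: mult_right_mono)
        also have "\<dots> = \<theta>" using pden by (simp add: p0_def)
        finally show ?thesis .
      qed
      have t3: "\<kappa>^2 * (\<epsilon>0 * C1) \<le> \<theta>" using \<epsilon>0(3) k0 C1 by (simp add: pos_le_divide_eq mult.commute mult.left_commute)
      have nN: "norm N \<le> 3*\<theta>"
      proof -
        have a1: "norm (of_real (s*(1+d) + d*\<kappa>*y* s) :: complex) = s*(1+d) + d*\<kappa>*y* s"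
        proof -
          have "0 \<le> s*(1+d) + d*\<kappa>*y* s" using s d k0 y0 by simp
          thus ?thesis by (simp only: norm_of_real abs_of_nonneg)
        qed
        have a2: "norm (of_real (2*W*\<kappa>)*\<mu>*\<nu>) \<le> 2*W*\<kappa>*(2*(n0+1))"
        proof -
          have "norm (of_real (2*W*\<kappa>)*\<mu>*\<nu>) = 2*W*\<kappa>*(norm \<mu>*norm \<nu>)"
            using W k0 by (simp add: norm_mult)
          also have "\<dots> \<le> 2*W*\<kappa>*(2*(n0+1))"
            using nmu nnu W k0 by (intro mult_left_mono mult_mono) auto
          finally show ?thesis .
        qed
        have a3: "norm (of_real (\<kappa>^2)*(\<mu>*\<nu>^2 - of_real (n0^2))) \<le> \<kappa>^2 * (\<epsilon>0 * C1)"
        proof -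
          have "norm (of_real (\<kappa>^2) :: complex) = \<kappa>^2" by (simp only: norm_of_real abs_power2)
          hence "norm (of_real (\<kappa>^2)*(\<mu>*\<nu>^2 - of_real (n0^2))) = \<kappa>^2 * norm (\<mu>*\<nu>^2 - of_real (n0^2))"
            by (simp only: norm_mult)
          thus ?thesis using b3 by (simp add: mult_left_mono)
        qed
        have "norm N \<le> norm (of_real (s*(1+d) + d*\<kappa>*y* s) :: complex) + norm (of_real (2*W*\<kappa>)*\<mu>*\<nu>)
            + norm (of_real (\<kappa>^2)*(\<mu>*\<nu>^2 - of_real (n0^2)))"
          unfolding N_def by (rule norm3)
        thus ?thesis using a1 a2 a3 t1 t2 t3 by linarith
      qed
      have "norm (H u + d) = norm N / Q" using Qpos by (simp add: HN norm_divide)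
      also have "\<dots> \<le> (3*\<theta>) / ((1-\<kappa>)^2/d)"
        using nN Qge k1 d \<theta> by (intro frac_le) auto
      also have "\<dots> = \<eta>" using d k1 by (simp add: \<theta>_def field_simps)
      finally show "norm (H u + d) \<le> r/(2*exp(Re u0 + r))" by (simp add: \<eta>_def)
    qed
    obtain u where u: "u \<in> cball u0 r" and eu: "exp (-u) = H u"
      using fp[OF r(1) r(2) eu0 Hc Hb] by blast
    have Reu: "Re u > 0"
    proof -
      have "\<bar>Re u0 - Re u\<bar> \<le> r" using u abs_Re_le_cmod[of "u0 - u"] by (simp add: dist_norm)
      moreover have "Re u0 = - ln d" by (simp add: u0_def)
      ultimately show ?thesis using r by linarith
    qed
    define \<Lambda> where "\<Lambda> = u / of_real L"
    have ReL: "Re \<Lambda> > 0" using Reu L0 by (simp add: \<Lambda>_def)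
    have nu: "norm u \<le> R" using u norm_triangle_ineq2[of u u0]
      by (simp add: R_def dist_norm norm_minus_commute)
    have nL: "norm \<Lambda> \<le> \<epsilon>0"
    proof -
      have "norm \<Lambda> = norm u / L" using L0 by (simp add: \<Lambda>_def norm_divide)
      also have "\<dots> \<le> R/L" using nu L0 by (simp add: divide_right_mono)
      finally show ?thesis using RL by simp
    qed
    have k1n: "1 - 1/\<kappa> = - n0" using k0 by (simp add: n0_def field_simps)
    have nz: "1 + \<Lambda> - 1/\<kappa> \<noteq> 0"
    proof
      assume a: "1 + \<Lambda> - 1/\<kappa> = 0"
      have c: "(1::complex) - 1/of_real \<kappa> = - of_real n0"
        using arg_cong[OF k1n, of complex_of_real] by simp
      have "\<Lambda> = (1 + \<Lambda> - 1/\<kappa>) - (1 - 1/of_real \<kappa>)" by simp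
      also have "\<dots> = 0 - (- of_real n0)" by (simp only: a c)
      finally have "\<Lambda> = of_real n0" by simp
      hence "norm \<Lambda> = n0" using n0 by simp
      thus False using nL \<epsilon>0 n0 by linarith
    qed
    have I: "- (2*W) / (1 + \<Lambda> - 1/\<kappa>) + (\<tau>*\<Omega>) / (\<kappa> * (1+\<Lambda>) * (1 + \<Lambda> - 1/\<kappa>)^2)
              * (1 - exp (- (2*W) * (1 + \<Lambda> - 1/\<kappa>) / (\<tau>*\<Omega>))) = \<kappa>"
    proof -
      define \<nu> where "\<nu> = - of_real n0 + \<Lambda>"
      have c: "(1::complex) - 1/of_real \<kappa> = - of_real n0"
        using arg_cong[OF k1n, of complex_of_real] by simp
      have nueq: "1 + \<Lambda> - complex_of_real (1/\<kappa>) = \<nu>"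
      proof -
        have "1 + \<Lambda> - complex_of_real (1/\<kappa>) = (1 - 1/of_real \<kappa>) + \<Lambda>" by simp
        also have "\<dots> = \<nu>" by (simp only: c \<nu>_def)
        finally show ?thesis .
      qed
      have nu0: "\<nu> \<noteq> 0"
      proof
        assume "\<nu> = 0"
        hence "1 + \<Lambda> - complex_of_real (1/\<kappa>) = 0" using nueq by simp
        thus False using nz by simp
      qed
      have "Re (1 + \<Lambda>) > 0" using ReL by simp
      hence mu0: "(1 + \<Lambda>) \<noteq> 0" by (metis zero_complex.sel(1) less_irrefl)
      have LL: "of_real L * \<Lambda> = u" using L0 by (simp add: \<Lambda>_def)
      have Ln0: "L * n0 = y" using k0 k1 by (simp add: L_def n0_def)
      have ts: "complex_of_real (\<tau>*\<Omega>) = of_real s" by (simp add: s_def)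
      have s0: "(of_real s :: complex) \<noteq> 0" using s by simp
      have "- (2*W) * \<nu> / (\<tau>*\<Omega>) = - (of_real L * of_real s) * \<nu> / of_real s"
        using arg_cong[OF LW, of complex_of_real] ts by simp
      also have "\<dots> = - of_real L * \<nu>" using s0 by simp
      also have "\<dots> = of_real (L*n0) - of_real L * \<Lambda>" by (simp add: \<nu>_def algebra_simps)
      also have "\<dots> = of_real y - u" using LL Ln0 by simp
      finally have ex1: "- (2*W) * \<nu> / (\<tau>*\<Omega>) = of_real y - u" .
      have "exp (of_real y - u) = exp (of_real y) * H u" using eu by (simp add: exp_diff exp_minus divide_inverse)
      also have "\<dots> = (of_real s - of_real (2*W*\<kappa>)*(1 + \<Lambda>)*\<nu> - of_real (\<kappa>^2)*(1 + \<Lambda>)*\<nu>^2) / of_real s"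
      proof -
        have "H u = (of_real s - of_real (2*W*\<kappa>)*(1 + \<Lambda>)*\<nu> - of_real (\<kappa>^2)*(1 + \<Lambda>)*\<nu>^2) / of_real Q"
          by (simp add: H_def \<nu>_def \<Lambda>_def)
        moreover have "(of_real Q :: complex) = of_real s * exp (of_real y)" by (simp add: Q_def exp_of_real)
        ultimately show ?thesis using s0 by simp
      qed
      finally have ex2: "exp (- (2*W) * \<nu> / (\<tau>*\<Omega>)) = (of_real s - of_real (2*W*\<kappa>)*(1 + \<Lambda>)*\<nu> - of_real (\<kappa>^2)*(1 + \<Lambda>)*\<nu>^2) / of_real s"
        using ex1 by simp
      have "- (2*W) / \<nu> + (of_real s) / (\<kappa> * (1 + \<Lambda>) * \<nu>^2)
              * (1 - (of_real s - of_real (2*W*\<kappa>)*(1 + \<Lambda>)*\<nu> - of_real (\<kappa>^2)*(1 + \<Lambda>)*\<nu>^2) / of_real s) = \<kappa>"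
        using alg[OF s0 nu0 mu0, of "of_real \<kappa>" "of_real (2*W)"] k0 by simp
      thus ?thesis unfolding nueq ex2 ts[symmetric]  .
    qed
    have "tw_eigenvalue \<kappa> \<Omega> \<tau> W (\<Lambda> / \<tau>)"
      using eig_pos[OF k0 k1 Om _ W ReL nz I] tau by simp
    moreover have "Re (\<Lambda>/\<tau>) > 0" using ReL tau by simp
    ultimately show "\<exists>lam. Re lam > 0 \<and> tw_eigenvalue \<kappa> \<Omega> \<tau> W lam" by blast
  qed
qed


theorem corollary2p4:
  fixes \<kappa> \<Omega> \<delta> :: real
  assumes "0 < \<kappa>" and "\<kappa> < 1" and "\<Omega> \<noteq> 0" and "0 < \<delta>" and "\<delta> < 2"
  shows "\<exists>\<tau>0>0. \<forall>\<tau>. 0 < \<tau> \<and> \<tau> < \<tau>0 \<longrightarrow>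
           (\<forall>W>0. width_eq \<kappa> \<Omega> \<delta> \<tau> W \<longrightarrow>
              (\<exists>lam. Re lam > 0 \<and> tw_eigenvalue \<kappa> \<Omega> \<tau> W lam))"
proof (cases "\<Omega> > 0")
  case True
  show ?thesis by (rule main_pos[OF assms(1,2) True assms(4,5)])
next
  case False
  hence neg: "0 < - \<Omega>" using assms(3) by simp
  obtain \<tau>0 where t0: "\<tau>0 > 0" and H: "\<forall>\<tau>. 0 < \<tau> \<and> \<tau> < \<tau>0 \<longrightarrow>
           (\<forall>W>0. width_eq \<kappa> (-\<Omega>) \<delta> \<tau> W \<longrightarrow>
              (\<exists>lam. Re lam > 0 \<and> tw_eigenvalue \<kappa> (-\<Omega>) \<tau> W lam))"
    using main_pos[OF assms(1,2) neg assms(4,5)] by blast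
  have wq: "width_eq \<kappa> (-\<Omega>) \<delta> \<tau> W = width_eq \<kappa> \<Omega> \<delta> \<tau> W" for \<tau> W
    by (simp add: width_eq_def)
  show ?thesis
    using t0 H eig_reflect unfolding wq by blast
qed

end
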